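(* Let $(X,\phi)$ be a flow on a compact metric space $(X,d)$. Then \begin{align*} \overline{\mathrm{mdim}}_M(\phi,X,d)&=\limsup_{\epsilon\to0}\liminf_{t\to\infty}\frac{\log r_t(\phi,X,d,\epsilon)}{t\log\frac1\epsilon},\\ \underline{\mathrm{mdim}}_M(\phi,X,d)&=\liminf_{\epsilon\to0}\liminf_{t\to\infty}\frac{\log r_t(\phi,X,d,\epsilon)}{t\log\frac1\epsilon}. \end{align*}
   Context: A flow: $\phi:X\times\mathbb{R}\to X$ continuous, $\phi_t(x)=\phi(x,t)$, $\phi_0=\mathrm{id}$, $\phi_{t+s}=\phi_t\circ\phi_s$. $d_t(x,y)=\max_{s\in[0,t]}d(\phi_sx,\phi_sy)$. $r_t(\phi,X,d,\epsilon)$ is the minimal cardinality of $E\subset X$ such that every $x\in X$ has $y\in E$ with $d_t(x,y)<\epsilon$; $r(\phi,X,d,\epsilon)=\limsup_{t\to\infty}\frac1t\log r_t(\phi,X,d,\epsilon)$; $\overline{\mathrm{mdim}}_M(\phi,X,d)=\limsup_{\epsilon\to0}\frac{r(\phi,X,d,\epsilon)}{\log(1/\epsilon)}$, $\underline{\mathrm{mdim}}_M(\phi,X,d)=\liminf_{\epsilon\to0}\frac{r(\phi,X,d,\epsilon)}{\log(1/\epsilon)}$. *)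

theory Defs
  imports "HOL-Analysis.Analysis" "HOL-Library.Liminf_Limsup" "HOL-Library.Extended_Real"
begin

definition is_flow :: "'a::metric_space set \<Rightarrow> ('a \<Rightarrow> real \<Rightarrow> 'a) \<Rightarrow> bool" where
  "is_flow X phi \<longleftrightarrow>
     continuous_on (X \<times> UNIV) (\<lambda>(x, t). phi x t) \<and>
     (\<forall>x\<in>X. \<forall>t. phi x t \<in> X) \<and>
     (\<forall>x\<in>X. phi x 0 = x) \<and>
     (\<forall>x\<in>X. \<forall>t s. phi x (t + s) = phi (phi x s) t)"

definition bowen_dist :: "('a::metric_space \<Rightarrow> real \<Rightarrow> 'a) \<Rightarrow> real \<Rightarrow> 'a \<Rightarrow> 'a \<Rightarrow> real" where
  "bowen_dist phi t x y = (SUP s\<in>{0..t}. dist (phi x s) (phi y s))"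

definition span_num :: "'a::metric_space set \<Rightarrow> ('a \<Rightarrow> real \<Rightarrow> 'a) \<Rightarrow> real \<Rightarrow> real \<Rightarrow> nat" where
  "span_num X phi t eps =
     Inf {card E | E. finite E \<and> E \<subseteq> X \<and> (\<forall>x\<in>X. \<exists>y\<in>E. bowen_dist phi t x y < eps)}"

definition span_rate :: "'a::metric_space set \<Rightarrow> ('a \<Rightarrow> real \<Rightarrow> 'a) \<Rightarrow> real \<Rightarrow> ereal" where
  "span_rate X phi eps = Limsup at_top (\<lambda>t. ereal (ln (real (span_num X phi t eps)) / t))"

definition upper_mdim_M :: "'a::metric_space set \<Rightarrow> ('a \<Rightarrow> real \<Rightarrow> 'a) \<Rightarrow> ereal" where
  "upper_mdim_M X phi = Limsup (at_right 0) (\<lambda>eps. span_rate X phi eps / ereal (ln (1 / eps)))"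

definition lower_mdim_M :: "'a::metric_space set \<Rightarrow> ('a \<Rightarrow> real \<Rightarrow> 'a) \<Rightarrow> ereal" where
  "lower_mdim_M X phi = Liminf (at_right 0) (\<lambda>eps. span_rate X phi eps / ereal (ln (1 / eps)))"

end

theory Submission
  imports Defs "HOL-Real_Asymp.Real_Asymp"
begin

lemma bd_bdd:
  assumes "compact X" "is_flow X phi" "x \<in> X" "y \<in> X"
  shows "bdd_above ((\<lambda>s. dist (phi x s) (phi y s)) ` S)"
proof -
  have "bounded X" using assms(1) compact_imp_bounded by blast
  moreover have "\<And>s. phi x s \<in> X" "\<And>s. phi y s \<in> X" using assms unfolding is_flow_def by auto
  ultimately show ?thesis
    by (intro bdd_aboveI[where M="diameter X"]) (auto intro: diameter_bounded_bound)
qed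

lemma bd_upper:
  assumes "compact X" "is_flow X phi" "x \<in> X" "y \<in> X" "0 \<le> s" "s \<le> t"
  shows "dist (phi x s) (phi y s) \<le> bowen_dist phi t x y"
  unfolding bowen_dist_def
  by (rule cSUP_upper) (use assms bd_bdd[OF assms(1-4)] in auto)

lemma bd_least:
  assumes "0 \<le> t" "\<And>s. 0 \<le> s \<Longrightarrow> s \<le> t \<Longrightarrow> dist (phi x s) (phi y s) \<le> e"
  shows "bowen_dist phi t x y \<le> e"
  unfolding bowen_dist_def
  by (rule cSUP_least) (use assms in auto)

lemma bd_sym: "bowen_dist phi t x y = bowen_dist phi t y x"
  unfolding bowen_dist_def by (simp add: dist_commute)

lemma bd_triangle:
  assumes "compact X" "is_flow X phi" "x \<in> X" "y \<in> X" "z \<in> X" "0 \<le> t"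
  shows "bowen_dist phi t x z \<le> bowen_dist phi t x y + bowen_dist phi t y z"
proof (rule bd_least[OF assms(6)])
  fix s assume s: "0 \<le> s" "s \<le> t"
  have "dist (phi x s) (phi z s) \<le> dist (phi x s) (phi y s) + dist (phi y s) (phi z s)"
    by (rule dist_triangle)
  also have "\<dots> \<le> bowen_dist phi t x y + bowen_dist phi t y z"
    using bd_upper[OF assms(1,2,3,4) s] bd_upper[OF assms(1,2,4,5) s] by linarith
  finally show "dist (phi x s) (phi z s) \<le> bowen_dist phi t x y + bowen_dist phi t y z" .
qed

lemma bd_mono:
  assumes "compact X" "is_flow X phi" "x \<in> X" "y \<in> X" "0 \<le> t" "t \<le> t'"
  shows "bowen_dist phi t x y \<le> bowen_dist phi t' x y"
  by (rule bd_least[OF assms(5)]) (use bd_upper[OF assms(1-4)] assms in auto)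

lemma bd_small:
  assumes "compact X" "is_flow X phi" "e > 0" "0 \<le> t"
  shows "\<exists>d>0. \<forall>x\<in>X. \<forall>y\<in>X. dist x y < d \<longrightarrow> bowen_dist phi t x y < e"
proof -
  note True = assms(4)
  have "compact (X \<times> {0..t})" using assms(1) by (simp add: compact_Times)
  moreover have "continuous_on (X \<times> {0..t}) (\<lambda>(x, s). phi x s)"
    using assms(2) unfolding is_flow_def by (auto intro: continuous_on_subset)
  ultimately have "uniformly_continuous_on (X \<times> {0..t}) (\<lambda>(x, s). phi x s)"
    by (rule compact_uniformly_continuous[rotated])
  then obtain d where d: "d > 0" and
    dd: "\<And>p q. p \<in> X \<times> {0..t} \<Longrightarrow> q \<in> X \<times> {0..t} \<Longrightarrow> dist q p < d \<Longrightarrow>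
         dist ((\<lambda>(x, s). phi x s) q) ((\<lambda>(x, s). phi x s) p) < e/2"
    unfolding uniformly_continuous_on_def using assms(3) by (metis half_gt_zero)
  show ?thesis
  proof (intro exI[of _ d] conjI ballI impI d)
    fix x y assume xy: "x \<in> X" "y \<in> X" "dist x y < d"
    have "bowen_dist phi t x y \<le> e/2"
    proof (rule bd_least[OF True])
      fix s assume s: "0 \<le> s" "s \<le> t"
      have "dist (x, s) (y, s) < d" using xy by (simp add: dist_Pair_Pair)
      then have "dist (phi x s) (phi y s) < e/2"
        using dd[of "(y,s)" "(x,s)"] xy s by auto
      then show "dist (phi x s) (phi y s) \<le> e/2" by simp
    qed
    then show "bowen_dist phi t x y < e" using assms(3) by simp
  qed
qed


definition span_sets where
  "span_sets X phi t eps = {E. finite E \<and> E \<subseteq> X \<and> (\<forall>x\<in>X. \<exists>y\<in>E. bowen_dist phi t x y < eps)}"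

lemma span_num_alt: "span_num X phi t eps = Inf (card ` span_sets X phi t eps)"
  unfolding span_num_def span_sets_def by (rule arg_cong[where f=Inf]) auto

lemma span_exists:
  assumes "compact X" "is_flow X phi" "e > 0" "0 \<le> t"
  shows "span_sets X phi t e \<noteq> {}"
proof -
  obtain d where d: "d > 0" "\<And>x y. x \<in> X \<Longrightarrow> y \<in> X \<Longrightarrow> dist x y < d \<Longrightarrow> bowen_dist phi t x y < e"
    using bd_small[OF assms] by blast
  have "X \<subseteq> (\<Union>c\<in>X. ball c d)" using d(1) by auto
  then obtain C where C: "C \<subseteq> X" "finite C" "X \<subseteq> (\<Union>c\<in>C. ball c d)"
    using compactE_image[OF assms(1), of X "\<lambda>c. ball c d"] by auto
  have "C \<in> span_sets X phi t e"
    unfolding span_sets_def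
  proof (intro CollectI conjI ballI C(1,2))
    fix x assume x: "x \<in> X"
    then obtain c where c: "c \<in> C" "x \<in> ball c d" using C(3) by auto
    then have "bowen_dist phi t x c < e" using d(2)[of x c] x C(1) by (auto simp: dist_commute)
    then show "\<exists>y\<in>C. bowen_dist phi t x y < e" using c by blast
  qed
  then show ?thesis by blast
qed

lemma span_num_attained:
  assumes "compact X" "is_flow X phi" "e > 0" "0 \<le> t"
  obtains E where "E \<in> span_sets X phi t e" "card E = span_num X phi t e"
proof -
  have "Inf (card ` span_sets X phi t e) \<in> card ` span_sets X phi t e"
    using span_exists[OF assms] by (intro Inf_nat_def1) auto
  then show ?thesis using that unfolding span_num_alt by auto
qed

lemma span_num_le:
  assumes "E \<in> span_sets X phi t e"
  shows "span_num X phi t e \<le> card E"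
  unfolding span_num_alt using assms by (intro cInf_lower) auto

lemma span_num_mono_t:
  assumes "compact X" "is_flow X phi" "e > 0" "0 \<le> t" "t \<le> t'"
  shows "span_num X phi t e \<le> span_num X phi t' e"
proof -
  obtain E where E: "E \<in> span_sets X phi t' e" "card E = span_num X phi t' e"
    using span_num_attained[OF assms(1-3)] assms(4,5) by (metis order_trans)
  have "E \<in> span_sets X phi t e"
    unfolding span_sets_def
  proof (intro CollectI conjI ballI)
    show "finite E" "E \<subseteq> X" using E(1) unfolding span_sets_def by auto
    fix x assume x: "x \<in> X"
    then obtain y where y: "y \<in> E" "bowen_dist phi t' x y < e" using E(1) unfolding span_sets_def by blast
    have "y \<in> X" using y(1) E(1) unfolding span_sets_def by blast
    then have "bowen_dist phi t x y \<le> bowen_dist phi t' x y" using bd_mono[OF assms(1,2) x _ assms(4,5)] by blast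
    then show "\<exists>y\<in>E. bowen_dist phi t x y < e" using y by force
  qed
  then show ?thesis using span_num_le E(2) by metis
qed

lemma span_num_pos:
  assumes "compact X" "is_flow X phi" "e > 0" "0 \<le> t" "X \<noteq> {}"
  shows "span_num X phi t e \<ge> 1"
proof -
  obtain E where E: "E \<in> span_sets X phi t e" "card E = span_num X phi t e"
    using span_num_attained[OF assms(1-4)] by blast
  then have "E \<noteq> {}" "finite E" using assms(5) unfolding span_sets_def by auto
  then show ?thesis using E(2) by (metis One_nat_def Suc_leI card_gt_0_iff)
qed

definition cover_sets where
  "cover_sets X phi t eps = {C. finite C \<and> (\<forall>A\<in>C. A \<subseteq> X \<and> (\<forall>x\<in>A. \<forall>y\<in>A. bowen_dist phi t x y \<le> eps)) \<and> \<Union>C = X}"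

definition cover_num where
  "cover_num X phi t eps = Inf (card ` cover_sets X phi t eps)"

lemma cover_num_le:
  assumes "C \<in> cover_sets X phi t e"
  shows "cover_num X phi t e \<le> card C"
  unfolding cover_num_def using assms by (intro cInf_lower) auto

lemma cover_from_span:
  assumes "compact X" "is_flow X phi" "e > 0" "0 \<le> t" "E \<in> span_sets X phi t e"
  shows "cover_num X phi t (2*e) \<le> card E"
proof -
  define C where "C = (\<lambda>y. {x\<in>X. bowen_dist phi t x y < e}) ` E"
  have fin: "finite E" using assms(5) unfolding span_sets_def by auto
  have EX: "E \<subseteq> X" using assms(5) unfolding span_sets_def by auto
  have "C \<in> cover_sets X phi t (2*e)"
    unfolding cover_sets_def
  proof (intro CollectI conjI ballI)
    show "finite C" unfolding C_def using fin by simp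
    show "\<Union>C = X" using assms(5) unfolding C_def span_sets_def by auto
    fix A assume "A \<in> C"
    then obtain y where y: "y \<in> E" "A = {x\<in>X. bowen_dist phi t x y < e}" unfolding C_def by auto
    show "A \<subseteq> X" using y by auto
    fix x z assume xzA: "x \<in> A" "z \<in> A"
    show "bowen_dist phi t x z \<le> 2 * e"
    proof -
      have xz: "x \<in> X" "z \<in> X" "bowen_dist phi t x y < e" "bowen_dist phi t z y < e"
        using y xzA by auto
      have "bowen_dist phi t x z \<le> bowen_dist phi t x y + bowen_dist phi t y z"
        using bd_triangle[OF assms(1,2) xz(1) _ xz(2) assms(4), of y] y(1) EX by auto
      then show ?thesis using xz bd_sym[of phi t y z] by linarith
    qed
  qed
  then have "cover_num X phi t (2*e) \<le> card C" by (rule cover_num_le)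
  also have "card C \<le> card E" unfolding C_def using fin by (rule card_image_le)
  finally show ?thesis .
qed

lemma cover_exists:
  assumes "compact X" "is_flow X phi" "e > 0" "0 \<le> t"
  shows "cover_sets X phi t e \<noteq> {}"
proof -
  obtain E where E: "E \<in> span_sets X phi t (e/2)"
    using span_exists[OF assms(1,2) _ assms(4), of "e/2"] assms(3) by auto
  define C where "C = (\<lambda>y. {x\<in>X. bowen_dist phi t x y < e/2}) ` E"
  have "C \<in> cover_sets X phi t e"
    unfolding cover_sets_def
  proof (intro CollectI conjI ballI)
    show "finite C" unfolding C_def using E unfolding span_sets_def by simp
    show "\<Union>C = X" using E unfolding C_def span_sets_def by auto
    fix A assume "A \<in> C"
    then obtain y where y: "y \<in> E" "A = {x\<in>X. bowen_dist phi t x y < e/2}" unfolding C_def by auto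
    show "A \<subseteq> X" using y by auto
    fix x z assume xzA: "x \<in> A" "z \<in> A"
    show "bowen_dist phi t x z \<le> e"
    proof -
      have xz: "x \<in> X" "z \<in> X" "bowen_dist phi t x y < e/2" "bowen_dist phi t z y < e/2"
        using y xzA by auto
      have "y \<in> X" using y E unfolding span_sets_def by auto
      then have "bowen_dist phi t x z \<le> bowen_dist phi t x y + bowen_dist phi t y z"
        using bd_triangle[OF assms(1,2) xz(1) _ xz(2) assms(4), of y] by auto
      then show ?thesis using xz bd_sym[of phi t y z] by linarith
    qed
  qed
  then show ?thesis by blast
qed

lemma cover_num_attained:
  assumes "compact X" "is_flow X phi" "e > 0" "0 \<le> t"
  obtains C where "C \<in> cover_sets X phi t e" "card C = cover_num X phi t e"
proof -
  have "Inf (card ` cover_sets X phi t e) \<in> card ` cover_sets X phi t e"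
    using cover_exists[OF assms] by (intro Inf_nat_def1) auto
  then show ?thesis using that unfolding cover_num_def by auto
qed

lemma span_from_cover:
  assumes "compact X" "is_flow X phi" "e > 0" "0 \<le> t" "C \<in> cover_sets X phi t e" "e < e'"
  shows "span_num X phi t e' \<le> card C"
proof -
  define E where "E = (\<lambda>A. SOME x. x \<in> A) ` (C - {{}})"
  have fin: "finite C" using assms(5) unfolding cover_sets_def by auto
  have "E \<in> span_sets X phi t e'"
    unfolding span_sets_def
  proof (intro CollectI conjI ballI)
    show "finite E" unfolding E_def using fin by simp
    show "E \<subseteq> X"
    proof
      fix z assume "z \<in> E"
      then obtain A where A: "A \<in> C" "A \<noteq> {}" "z = (SOME x. x \<in> A)" unfolding E_def by auto
      then have "z \<in> A" by (metis ex_in_conv someI_ex)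
      then show "z \<in> X" using A(1) assms(5) unfolding cover_sets_def by blast
    qed
    fix x assume "x \<in> X"
    then obtain A where A: "A \<in> C" "x \<in> A" using assms(5) unfolding cover_sets_def by auto
    have y: "(SOME x. x \<in> A) \<in> A" using A(2) by (rule someI)
    have "(SOME x. x \<in> A) \<in> E" using A unfolding E_def by auto
    moreover have "bowen_dist phi t x (SOME x. x \<in> A) \<le> e"
      using assms(5) A y unfolding cover_sets_def by blast
    ultimately show "\<exists>y\<in>E. bowen_dist phi t x y < e'" using assms(6) by force
  qed
  then have "span_num X phi t e' \<le> card E" by (rule span_num_le)
  also have "card E \<le> card (C - {{}})" unfolding E_def using fin by (intro card_image_le) simp
  also have "\<dots> \<le> card C" using fin by (intro card_mono) auto
  finally show ?thesis .
qed


lemma cover_num_pos: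
  assumes "compact X" "is_flow X phi" "e > 0" "0 \<le> t" "X \<noteq> {}"
  shows "cover_num X phi t e \<ge> 1"
proof -
  obtain C where C: "C \<in> cover_sets X phi t e" "card C = cover_num X phi t e"
    using cover_num_attained[OF assms(1-4)] by blast
  then have "C \<noteq> {}" "finite C" using assms(5) unfolding cover_sets_def by auto
  then show ?thesis using C(2) by (metis One_nat_def Suc_leI card_gt_0_iff)
qed

lemma cover_num_mono_t:
  assumes "compact X" "is_flow X phi" "e > 0" "0 \<le> t" "t \<le> t'"
  shows "cover_num X phi t e \<le> cover_num X phi t' e"
proof -
  obtain C where C: "C \<in> cover_sets X phi t' e" "card C = cover_num X phi t' e"
    using cover_num_attained[OF assms(1-3)] assms(4,5) by (metis order_trans)
  have "C \<in> cover_sets X phi t e"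
    unfolding cover_sets_def
  proof (intro CollectI conjI ballI)
    show "finite C" "\<Union>C = X" using C(1) unfolding cover_sets_def by auto
    fix A assume A: "A \<in> C"
    then show AX: "A \<subseteq> X" using C(1) unfolding cover_sets_def by auto
    fix x y assume xy: "x \<in> A" "y \<in> A"
    then have "bowen_dist phi t' x y \<le> e" using A C(1) unfolding cover_sets_def by blast
    moreover have "bowen_dist phi t x y \<le> bowen_dist phi t' x y"
      using bd_mono[OF assms(1,2) _ _ assms(4,5)] xy AX by blast
    ultimately show "bowen_dist phi t x y \<le> e" by linarith
  qed
  then show ?thesis using cover_num_le C(2) by metis
qed

lemma cover_num_submult:
  assumes "compact X" "is_flow X phi" "e > 0" "0 \<le> t" "0 \<le> s"
  shows "cover_num X phi (t + s) e \<le> cover_num X phi t e * cover_num X phi s e"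
proof -
  obtain C1 where C1: "C1 \<in> cover_sets X phi t e" "card C1 = cover_num X phi t e"
    using cover_num_attained[OF assms(1-4)] by blast
  obtain C2 where C2: "C2 \<in> cover_sets X phi s e" "card C2 = cover_num X phi s e"
    using cover_num_attained[OF assms(1-3,5)] by blast
  have f1: "finite C1" and f2: "finite C2" using C1 C2 unfolding cover_sets_def by auto
  have phiX: "\<And>x u. x \<in> X \<Longrightarrow> phi x u \<in> X" using assms(2) unfolding is_flow_def by auto
  have phiadd: "\<And>x u v. x \<in> X \<Longrightarrow> phi x (u + v) = phi (phi x v) u"
    using assms(2) unfolding is_flow_def by auto
  define D where "D = (\<lambda>(A, B). {x\<in>A. phi x t \<in> B}) ` (C1 \<times> C2)"
  have "D \<in> cover_sets X phi (t + s) e"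
    unfolding cover_sets_def
  proof (intro CollectI conjI ballI)
    show "finite D" unfolding D_def using f1 f2 by simp
    show "\<Union>D = X"
    proof
      show "\<Union>D \<subseteq> X" using C1(1) unfolding D_def cover_sets_def by auto
      show "X \<subseteq> \<Union>D"
      proof
        fix x assume x: "x \<in> X"
        then obtain A where A: "A \<in> C1" "x \<in> A" using C1(1) unfolding cover_sets_def by auto
        have "phi x t \<in> X" using phiX x by blast
        then obtain B where B: "B \<in> C2" "phi x t \<in> B" using C2(1) unfolding cover_sets_def by auto
        have "x \<in> {x\<in>A. phi x t \<in> B}" using A B by auto
        moreover have "{x\<in>A. phi x t \<in> B} \<in> D" unfolding D_def using A B by force
        ultimately show "x \<in> \<Union>D" by blast
      qed
    qed
    fix P assume "P \<in> D"
    then obtain A B where AB: "A \<in> C1" "B \<in> C2" "P = {x\<in>A. phi x t \<in> B}" unfolding D_def by auto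
    have AX: "A \<subseteq> X" using AB(1) C1(1) unfolding cover_sets_def by auto
    then show "P \<subseteq> X" using AB by auto
    fix x y assume xy: "x \<in> P" "y \<in> P"
    then have xyA: "x \<in> A" "y \<in> A" and xyB: "phi x t \<in> B" "phi y t \<in> B" using AB by auto
    have xX: "x \<in> X" and yX: "y \<in> X" using xyA AX by auto
    have b1: "bowen_dist phi t x y \<le> e" using xyA AB(1) C1(1) unfolding cover_sets_def by blast
    have BX: "B \<subseteq> X" using AB(2) C2(1) unfolding cover_sets_def by auto
    have b2: "bowen_dist phi s (phi x t) (phi y t) \<le> e" using xyB AB(2) C2(1) unfolding cover_sets_def by blast
    show "bowen_dist phi (t + s) x y \<le> e"
    proof (rule bd_least)
      show "0 \<le> t + s" using assms by simp
      fix u assume u: "0 \<le> u" "u \<le> t + s"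
      show "dist (phi x u) (phi y u) \<le> e"
      proof (cases "u \<le> t")
        case True
        then show ?thesis using bd_upper[OF assms(1,2) xX yX u(1) True] b1 by linarith
      next
        case False
        have eq: "u = (u - t) + t" by simp
        have "phi x u = phi (phi x t) (u - t)" using phiadd[OF xX, of "u - t" t] eq by metis
        moreover have "phi y u = phi (phi y t) (u - t)" using phiadd[OF yX, of "u - t" t] eq by metis
        moreover have "dist (phi (phi x t) (u - t)) (phi (phi y t) (u - t)) \<le> bowen_dist phi s (phi x t) (phi y t)"
          using bd_upper[OF assms(1,2) phiX[OF xX] phiX[OF yX]] False u by auto
        ultimately show ?thesis using b2 by (metis order_trans)
      qed
    qed
  qed
  then have "cover_num X phi (t + s) e \<le> card D" by (rule cover_num_le)
  also have "card D \<le> card (C1 \<times> C2)" unfolding D_def using f1 f2 by (intro card_image_le) simp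
  also have "\<dots> = cover_num X phi t e * cover_num X phi s e" using C1(2) C2(2) by (simp add: card_cartesian_product)
  finally show ?thesis .
qed

lemma cover_num_pow:
  assumes "compact X" "is_flow X phi" "e > 0" "0 < T" "n \<ge> 1"
  shows "cover_num X phi (real n * T) e \<le> cover_num X phi T e ^ n"
  using assms(5)
proof (induction n rule: dec_induct)
  case base
  then show ?case by simp
next
  case (step m)
  have "cover_num X phi (real (Suc m) * T) e = cover_num X phi (real m * T + T) e"
    by (simp add: algebra_simps)
  also have "\<dots> \<le> cover_num X phi (real m * T) e * cover_num X phi T e"
    using cover_num_submult[OF assms(1-3)] assms(4) by simp
  also have "\<dots> \<le> cover_num X phi T e ^ m * cover_num X phi T e"
    using step.IH by (simp add: mult_right_mono)
  finally show ?case by (simp add: mult.commute)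
qed

lemma cover_num_ln_bound:
  assumes "compact X" "is_flow X phi" "e > 0" "0 < T" "0 < t" "X \<noteq> {}"
  shows "ln (real (cover_num X phi t e)) \<le> (t / T + 1) * ln (real (cover_num X phi T e))"
proof -
  define n where "n = nat \<lceil>t / T\<rceil>"
  have tT: "t / T > 0" using assms by simp
  have n1: "n \<ge> 1" unfolding n_def using tT by linarith
  have nle: "real n \<le> t / T + 1" unfolding n_def using tT by linarith
  have nge: "t / T \<le> real n" unfolding n_def using tT by linarith
  then have "t \<le> real n * T" using assms(4) by (simp add: field_simps)
  then have "cover_num X phi t e \<le> cover_num X phi (real n * T) e"
    using cover_num_mono_t[OF assms(1-3)] assms(5) by simp
  also have "\<dots> \<le> cover_num X phi T e ^ n" by (rule cover_num_pow[OF assms(1-4) n1])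
  finally have le: "cover_num X phi t e \<le> cover_num X phi T e ^ n" .
  have p1: "cover_num X phi t e \<ge> 1" using cover_num_pos[OF assms(1-3) _ assms(6)] assms(5) by simp
  have p2: "cover_num X phi T e \<ge> 1" using cover_num_pos[OF assms(1-3) _ assms(6)] assms(4) by simp
  have "ln (real (cover_num X phi t e)) \<le> ln (real (cover_num X phi T e ^ n))"
    using le p1 p2 by (subst ln_le_cancel_iff) auto
  also have "\<dots> = real n * ln (real (cover_num X phi T e))"
    using p2 by (simp add: ln_realpow)
  also have "\<dots> \<le> (t / T + 1) * ln (real (cover_num X phi T e))"
    using nle p2 by (intro mult_right_mono) auto
  finally show ?thesis .
qed

lemma key_bound:
  assumes "compact X" "is_flow X phi" "e > 0" "0 < T" "0 < t" "X \<noteq> {}"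
  shows "ln (real (span_num X phi t e)) / t \<le>
         ln (real (span_num X phi T (e/4))) / T + ln (real (cover_num X phi T (e/2))) / t"
proof -
  have e2: "e/2 > 0" "e/2 < e" using assms(3) by auto
  obtain C where C: "C \<in> cover_sets X phi t (e/2)" "card C = cover_num X phi t (e/2)"
    using cover_num_attained[OF assms(1,2) e2(1) less_imp_le[OF assms(5)]] by blast
  have s1: "span_num X phi t e \<le> cover_num X phi t (e/2)"
    using span_from_cover[OF assms(1,2) e2(1) _ C(1) e2(2)] assms(5) C(2) by simp
  obtain E where E: "E \<in> span_sets X phi T (e/4)" "card E = span_num X phi T (e/4)"
    using span_num_attained[OF assms(1,2) _ less_imp_le[OF assms(4)], of "e/4"] assms(3) by auto
  have s2: "cover_num X phi T (e/2) \<le> span_num X phi T (e/4)"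
    using cover_from_span[OF assms(1,2) _ _ E(1)] assms(3,4) E(2) by simp
  have p0: "span_num X phi t e \<ge> 1" using span_num_pos[OF assms(1-3) _ assms(6)] assms(5) by simp
  have pc: "cover_num X phi T (e/2) \<ge> 1" using cover_num_pos[OF assms(1,2) e2(1) _ assms(6)] assms(4) by simp
  define K where "K = ln (real (cover_num X phi T (e/2)))"
  have K0: "K \<ge> 0" unfolding K_def using pc by simp
  have KS: "K \<le> ln (real (span_num X phi T (e/4)))" unfolding K_def using s2 pc by (subst ln_le_cancel_iff) auto
  have "ln (real (span_num X phi t e)) \<le> ln (real (cover_num X phi t (e/2)))"
    using s1 p0 by (subst ln_le_cancel_iff) auto
  also have "\<dots> \<le> (t / T + 1) * K" unfolding K_def
    by (rule cover_num_ln_bound[OF assms(1,2) e2(1) assms(4,5,6)])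
  finally have "ln (real (span_num X phi t e)) / t \<le> (t / T + 1) * K / t"
    using assms(5) by (simp add: divide_right_mono)
  also have "(t / T + 1) * K / t = K / T + K / t" using assms(4,5) by (simp add: field_simps)
  also have "\<dots> \<le> ln (real (span_num X phi T (e/4))) / T + K / t"
    using KS assms(4) by (simp add: divide_right_mono)
  finally show ?thesis unfolding K_def .
qed


lemma limsup_scale:
  fixes v :: "'b \<Rightarrow> ereal" and c :: "'b \<Rightarrow> real"
  assumes F: "F \<noteq> bot" and v0: "eventually (\<lambda>x. 0 \<le> v x) F" and c1: "(c \<longlongrightarrow> 1) F"
  shows "Limsup F (\<lambda>x. v x * ereal (c x)) \<le> Limsup F v"
  unfolding Limsup_le_iff
proof (intro allI impI)
  fix y assume y: "Limsup F v < y"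
  obtain z where z: "Limsup F v < ereal z" "ereal z < y" using ereal_dense2[OF y] by blast
  obtain w where w: "ereal z < ereal w" "ereal w < y" using ereal_dense2[OF z(2)] by blast
  have ev1: "eventually (\<lambda>x. v x < ereal z) F" using z(1) Limsup_le_iff[where C="Limsup F v" and F=F and X=v] by auto
  have "eventually (\<lambda>x. 0 \<le> v x \<and> v x < ereal z) F" using ev1 v0 by (auto elim: eventually_elim2)
  then obtain x0 where "0 \<le> v x0 \<and> v x0 < ereal z" using eventually_happens'[OF F] by blast
  then have zpos: "z > 0" by (metis ereal_less_eq(5) le_less_trans less_ereal.simps(1) zero_ereal_def)
  have "((\<lambda>x. c x * z) \<longlongrightarrow> 1 * z) F" by (intro tendsto_intros c1)
  then have ev2: "eventually (\<lambda>x. c x * z < w) F" using w(1) by (auto dest: order_tendstoD(2))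
  have ev3: "eventually (\<lambda>x. c x > 0) F" using order_tendstoD(1)[OF c1, of 0] by simp
  show "eventually (\<lambda>x. v x * ereal (c x) < y) F"
    using ev1 ev2 ev3 v0
  proof eventually_elim
    case (elim x)
    then obtain r where r: "v x = ereal r" "0 \<le> r" "r < z"
      by (cases "v x") auto
    have "r * c x \<le> z * c x" using r elim by (intro mult_right_mono) auto
    moreover have "z * c x < w" using elim(2) by (simp add: mult.commute)
    ultimately have "r * c x < w" by linarith
    then have "ereal (r * c x) < y" using w(2) by (meson ereal_less_eq(3) le_less_trans less_imp_le order_less_le_trans)
    then show ?case using r(1) by simp
  qed
qed

lemma liminf_scale:
  fixes v :: "'b \<Rightarrow> ereal" and c :: "'b \<Rightarrow> real"
  assumes F: "F \<noteq> bot" and v0: "eventually (\<lambda>x. 0 \<le> v x) F" and c1: "(c \<longlongrightarrow> 1) F"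
  shows "Liminf F (\<lambda>x. v x * ereal (c x)) \<le> Liminf F v"
  unfolding le_Liminf_iff
proof (intro allI impI)
  fix y assume y: "y < Liminf F (\<lambda>x. v x * ereal (c x))"
  show "eventually (\<lambda>x. y < v x) F"
  proof (cases "y < 0")
    case True
    then show ?thesis using v0 by (auto elim: eventually_mono)
  next
    case False
    then have "y \<noteq> \<infinity>" using y by auto
    with False obtain y0 where y0: "y = ereal y0" "0 \<le> y0" by (cases y) auto
    obtain w where w: "y < ereal w" "ereal w < Liminf F (\<lambda>x. v x * ereal (c x))"
      using ereal_dense2[OF y] by blast
    have ev1: "eventually (\<lambda>x. ereal w < v x * ereal (c x)) F"
      using w(2) le_Liminf_iff[where C="Liminf F (\<lambda>x. v x * ereal (c x))" and F=F and X="\<lambda>x. v x * ereal (c x)"] by auto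
    have "((\<lambda>x. c x * y0) \<longlongrightarrow> 1 * y0) F" by (intro tendsto_intros c1)
    then have ev2: "eventually (\<lambda>x. c x * y0 < w) F" using w(1) y0 by (auto dest: order_tendstoD(2))
    have ev3: "eventually (\<lambda>x. c x > 0) F" using order_tendstoD(1)[OF c1, of 0] by simp
    show ?thesis
      using ev1 ev2 ev3 v0
    proof eventually_elim
      case (elim x)
      show ?case
      proof (cases "v x")
        case (real r)
        then have "w < r * c x" using elim by simp
        moreover have "y0 * c x < w" using elim(2) by (simp add: mult.commute)
        ultimately have "y0 * c x < r * c x" by linarith
        then have "y0 < r" using elim(3) mult_less_cancel_right_pos by blast
        then show ?thesis using real y0 by simp
      next
        case PInf
        then show ?thesis using y0 by simp
      next
        case MInf
        then show ?thesis using elim by simp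
      qed
    qed
  qed
qed


definition lrate where
  "lrate X phi e = Liminf at_top (\<lambda>t. ereal (ln (real (span_num X phi t e)) / t))"

lemma ln_nat_nonneg: "0 \<le> ln (real (n::nat))"
  by (cases n) auto

lemma lrate_nonneg: "0 \<le> lrate X phi e"
proof -
  have "Liminf at_top (\<lambda>t::real. 0::ereal) \<le> lrate X phi e"
    unfolding lrate_def
    by (intro Liminf_mono eventually_mono[OF eventually_gt_at_top[of 0]]) (auto intro: divide_nonneg_pos ln_nat_nonneg)
  then show ?thesis by (simp add: Liminf_const)
qed

lemma lrate_le_rate: "lrate X phi e \<le> span_rate X phi e"
  unfolding lrate_def span_rate_def by (intro Liminf_le_Limsup) simp

lemma rate_le_lrate:
  assumes "compact X" "is_flow X phi" "e > 0"
  shows "span_rate X phi e \<le> lrate X phi (e/4)"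
proof (cases "X = {}")
  case True
  have "span_num X phi t e' = 0" for t e'
  proof -
    have "{card E |E. finite E \<and> E \<subseteq> X \<and> (\<forall>x\<in>X. \<exists>y\<in>E. bowen_dist phi t x y < e')} = {0}"
      using True by auto
    then show ?thesis unfolding span_num_def by simp
  qed
  then show ?thesis unfolding span_rate_def lrate_def by (simp add: Limsup_const Liminf_const)
next
  case False
  have bound: "span_rate X phi e \<le> ereal (ln (real (span_num X phi T (e/4))) / T)" if T: "T > 0" for T
  proof -
    define a where "a = ln (real (span_num X phi T (e/4))) / T"
    define K where "K = ln (real (cover_num X phi T (e/2)))"
    have "span_rate X phi e \<le> Limsup at_top (\<lambda>t. ereal (a + K / t))"
      unfolding span_rate_def a_def K_def
      by (intro Limsup_mono eventually_mono[OF eventually_gt_at_top[of 0]])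
         (use key_bound[OF assms _ _ False] T in auto)
    also have "\<dots> = ereal a"
    proof (rule lim_imp_Limsup)
      show "((\<lambda>t. ereal (a + K / t)) \<longlongrightarrow> ereal a) at_top"
        unfolding lim_ereal
        using tendsto_add[OF tendsto_const[of a] tendsto_divide_0[OF tendsto_const[of K] filterlim_at_top_imp_at_infinity[OF filterlim_ident]]]
        by simp
    qed simp
    finally show ?thesis unfolding a_def .
  qed
  show ?thesis
    unfolding lrate_def le_Liminf_iff
  proof (intro allI impI)
    fix y assume y: "y < span_rate X phi e"
    show "eventually (\<lambda>T. y < ereal (ln (real (span_num X phi T (e/4))) / T)) at_top"
      using eventually_gt_at_top[of 0]
      by eventually_elim (use y bound in \<open>auto intro: less_le_trans\<close>)
  qed
qed


theorem proposition2p4: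
  fixes X :: "'a::metric_space set" and phi :: "'a \<Rightarrow> real \<Rightarrow> 'a"
  assumes "compact X" and "is_flow X phi"
  shows "upper_mdim_M X phi =
           Limsup (at_right 0) (\<lambda>eps. Liminf at_top
              (\<lambda>t. ereal (ln (real (span_num X phi t eps)) / (t * ln (1 / eps))))) \<and>
         lower_mdim_M X phi =
           Liminf (at_right 0) (\<lambda>eps. Liminf at_top
              (\<lambda>t. ereal (ln (real (span_num X phi t eps)) / (t * ln (1 / eps)))))"
proof -
  define L where "L = (\<lambda>e::real. ln (1/e))"
  define a where "a = (\<lambda>e. span_rate X phi e * ereal (1 / L e))"
  define b where "b = (\<lambda>e. lrate X phi e * ereal (1 / L e))"
  define c where "c = (\<lambda>d. L d / L (4*d))"
  have ev01: "eventually (\<lambda>e. 0 < e \<and> e < 1/8) (at_right (0::real))"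
    unfolding eventually_at_right_field by (intro exI[of _ "1/8"]) auto
  have Lpos: "L e > 0" if "0 < e" "e < 1" for e
    using that unfolding L_def by (simp add: ln_div)
  have eqU: "upper_mdim_M X phi = Limsup (at_right 0) a"
    unfolding upper_mdim_M_def
  proof (intro Limsup_eq eventually_mono[OF ev01])
    fix e :: real assume e: "0 < e \<and> e < 1/8"
    then have "L e \<noteq> 0" using Lpos[of e] by simp
    then show "span_rate X phi e / ereal (ln (1 / e)) = a e"
      unfolding a_def by (simp add: L_def divide_ereal_def inverse_eq_divide)
  qed
  have eqL: "lower_mdim_M X phi = Liminf (at_right 0) a"
    unfolding lower_mdim_M_def
  proof (intro Liminf_eq eventually_mono[OF ev01])
    fix e :: real assume e: "0 < e \<and> e < 1/8"
    then have "L e \<noteq> 0" using Lpos[of e] by simp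
    then show "span_rate X phi e / ereal (ln (1 / e)) = a e"
      unfolding a_def by (simp add: L_def divide_ereal_def inverse_eq_divide)
  qed
  have eqb: "eventually (\<lambda>e. Liminf at_top
              (\<lambda>t. ereal (ln (real (span_num X phi t e)) / (t * ln (1 / e)))) = b e) (at_right 0)"
  proof (intro eventually_mono[OF ev01])
    fix e :: real assume e: "0 < e \<and> e < 1/8"
    then have Le: "L e > 0" using Lpos[of e] by simp
    have eqf: "(\<lambda>t. ereal (ln (real (span_num X phi t e)) / (t * ln (1 / e)))) =
          (\<lambda>t. ereal (ln (real (span_num X phi t e)) / t) * ereal (1 / L e))"
      by (simp add: L_def)
    show "Liminf at_top (\<lambda>t. ereal (ln (real (span_num X phi t e)) / (t * ln (1 / e)))) = b e"
      unfolding b_def lrate_def eqf by (rule Liminf_ereal_mult_right) (use Le in simp_all)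
  qed
  have eqR1: "Limsup (at_right 0) (\<lambda>eps. Liminf at_top
              (\<lambda>t. ereal (ln (real (span_num X phi t eps)) / (t * ln (1 / eps))))) = Limsup (at_right 0) b"
    by (rule Limsup_eq[OF eqb])
  have eqR2: "Liminf (at_right 0) (\<lambda>eps. Liminf at_top
              (\<lambda>t. ereal (ln (real (span_num X phi t eps)) / (t * ln (1 / eps))))) = Liminf (at_right 0) b"
    by (rule Liminf_eq[OF eqb])
  have ba: "eventually (\<lambda>e. b e \<le> a e) (at_right 0)"
  proof (intro eventually_mono[OF ev01])
    fix e :: real assume e: "0 < e \<and> e < 1/8"
    then have Le: "L e > 0" using Lpos[of e] by simp
    show "b e \<le> a e" unfolding a_def b_def
      by (rule ereal_mult_right_mono[OF lrate_le_rate]) (use Le in simp)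
  qed
  have b0: "eventually (\<lambda>e. 0 \<le> b e) (at_right 0)"
  proof (intro eventually_mono[OF ev01])
    fix e :: real assume e: "0 < e \<and> e < 1/8"
    then have Le: "L e > 0" using Lpos[of e] by simp
    show "0 \<le> b e" unfolding b_def
      by (rule ereal_0_le_mult[OF lrate_nonneg]) (use Le in simp)
  qed
  have ab4: "eventually (\<lambda>d. a (4 * d) \<le> b d * ereal (c d)) (at_right 0)"
  proof (intro eventually_mono[OF ev01])
    fix d :: real assume d: "0 < d \<and> d < 1/8"
    then have Ld: "L d > 0" and L4: "L (4*d) > 0" using Lpos[of d] Lpos[of "4*d"] by auto
    have "span_rate X phi (4 * d) \<le> lrate X phi d"
      using rate_le_lrate[OF assms, of "4*d"] d by simp
    then have "a (4 * d) \<le> lrate X phi d * ereal (1 / L (4 * d))"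
      unfolding a_def by (rule ereal_mult_right_mono) (use L4 in simp)
    also have "1 / L (4 * d) = (1 / L d) * c d" unfolding c_def using Ld L4 by (simp add: field_simps)
    also have "lrate X phi d * ereal (1 / L d * c d) = b d * ereal (c d)"
      unfolding b_def by (simp add: mult.assoc)
    finally show "a (4 * d) \<le> b d * ereal (c d)" .
  qed
  have c1: "(c \<longlongrightarrow> 1) (at_right 0)"
    unfolding c_def L_def by real_asymp
  have inj4: "inj ((*) (4::real))" by (auto simp: inj_def)
  have filt: "filtermap ((*) (4::real)) (at_right 0) = at_right 0"
    using filtermap_times_pos_at_right[of 4 0] by simp
  have A4s: "Limsup (at_right 0) a = Limsup (at_right 0) (\<lambda>d. a (4 * d))"
    using Limsup_filtermap_eq[OF inj4, of "at_right 0" a] filt by simp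
  have A4i: "Liminf (at_right 0) a = Liminf (at_right 0) (\<lambda>d. a (4 * d))"
    using Liminf_filtermap_eq[OF inj4, of "at_right 0" a] filt by simp
  have nb: "at_right (0::real) \<noteq> bot" by simp
  have "Limsup (at_right 0) a \<le> Limsup (at_right 0) b"
  proof -
    have "Limsup (at_right 0) a \<le> Limsup (at_right 0) (\<lambda>d. b d * ereal (c d))"
      unfolding A4s by (rule Limsup_mono[OF ab4])
    also have "\<dots> \<le> Limsup (at_right 0) b" by (rule limsup_scale[OF nb b0 c1])
    finally show ?thesis .
  qed
  moreover have "Limsup (at_right 0) b \<le> Limsup (at_right 0) a" by (rule Limsup_mono[OF ba])
  moreover have "Liminf (at_right 0) a \<le> Liminf (at_right 0) b"
  proof -
    have "Liminf (at_right 0) a \<le> Liminf (at_right 0) (\<lambda>d. b d * ereal (c d))"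
      unfolding A4i by (rule Liminf_mono[OF ab4])
    also have "\<dots> \<le> Liminf (at_right 0) b" by (rule liminf_scale[OF nb b0 c1])
    finally show ?thesis .
  qed
  moreover have "Liminf (at_right 0) b \<le> Liminf (at_right 0) a" by (rule Liminf_mono[OF ba])
  ultimately show ?thesis unfolding eqU eqL eqR1 eqR2 by auto
qed

end
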